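(* Let $0 < a < b < 1$ be fixed constants. For odd $n$, let $f_n$ be the multilinear extension to $[-1,1]^n$ of the majority function $\mathrm{Maj}_n:\{\pm1\}^n\to\{\pm1\}$, and for an integer $d$ let $f_n^{\le d}=\sum_{S\subseteq[n],|S|\le d}\hat f_n(S)\prod_{i\in S}x_i$ be its truncation to degree at most $d$ in the monomial (standard Fourier) basis. Then there exists $\delta = \delta(a,b) \in (0,1)$ such that, for each $n$, there is $t^*_n\in [a,b]$ with $|f_n^{\le \lfloor\delta n\rfloor}(t^*_n \cdot \vec{1})| \ge \omega_n(1)$, i.e. $|f_n^{\le \lfloor\delta n\rfloor}(t^*_n \cdot \vec{1})|\to\infty$ as $n\to\infty$.
   Context: $\hat f_n(S)=\mathbb{E}_{x\sim\{\pm1\}^n}[\mathrm{Maj}_n(x)\prod_{i\in S}x_i]$ are the Fourier coefficients of majority under the uniform distribution, so that $f_n(x)=\sum_{S\subseteq[n]}\hat f_n(S)\prod_{i\in S}x_i$. $\vec 1$ is the all-ones vector in $\mathbb{R}^n$. *)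

theory Defs
  imports Complex_Main "HOL-Library.FuncSet"
begin

definition cube :: "nat \<Rightarrow> (nat \<Rightarrow> real) set" where
  "cube n = PiE {..<n} (\<lambda>_. {-1, 1})"

text \<open>Majority function Maj_n(x) = sgn(x_1 + ... + x_n) (n odd, so never 0).\<close>
definition Maj :: "nat \<Rightarrow> (nat \<Rightarrow> real) \<Rightarrow> real" where
  "Maj n x = sgn (\<Sum>i<n. x i)"

definition fourier_coeff :: "nat \<Rightarrow> nat set \<Rightarrow> real" where
  "fourier_coeff n S = (\<Sum>x\<in>cube n. Maj n x * (\<Prod>i\<in>S. x i)) / 2 ^ n"

definition maj_trunc :: "nat \<Rightarrow> nat \<Rightarrow> (nat \<Rightarrow> real) \<Rightarrow> real" where
  "maj_trunc n d y = (\<Sum>S\<in>{S. S \<subseteq> {..<n} \<and> card S \<le> d}. fourier_coeff n S * (\<Prod>i\<in>S. y i))"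

end

theory Submission
  imports Defs "HOL-Computational_Algebra.Polynomial"
begin


lemma cube_Suc_sum:
  fixes F :: "(nat \<Rightarrow> real) \<Rightarrow> 'b::comm_monoid_add"
  shows "(\<Sum>x\<in>cube (Suc n). F x) = (\<Sum>v\<in>{-1,1::real}. \<Sum>g\<in>cube n. F (g(n:=v)))"
proof -
  have c: "cube (Suc n) = PiE (insert n {..<n}) (\<lambda>_. {-1,1::real})"
    unfolding cube_def by (simp add: lessThan_Suc)
  have "(\<Sum>x\<in>cube (Suc n). F x) = (\<Sum>(v,g)\<in>{-1,1::real} \<times> cube n. F (g(n:=v)))"
    unfolding c cube_def
    by (intro sum.reindex_bij_witness[of _ "\<lambda>(y,g). g(n := y)" "\<lambda>g. (g n, g(n := undefined))"])
       (auto simp: PiE_def extensional_def Pi_def less_Suc_eq)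
  also have "\<dots> = (\<Sum>v\<in>{-1,1::real}. \<Sum>g\<in>cube n. F (g(n:=v)))"
    by (subst sum.cartesian_product) auto
  finally show ?thesis .
qed

lemma pascal_sum:
  fixes h :: "nat \<Rightarrow> real poly"
  shows "(\<Sum>w\<le>Suc n. smult (of_nat (Suc n choose w)) (h w)) =
     (\<Sum>w\<le>n. smult (of_nat (n choose w)) (h w)) + (\<Sum>w\<le>n. smult (of_nat (n choose w)) (h (Suc w)))"
proof -
  have "(\<Sum>w\<le>Suc n. smult (of_nat (Suc n choose w)) (h w)) =
     h 0 + (\<Sum>w\<le>n. smult (of_nat (n choose w)) (h (Suc w))) + (\<Sum>w\<le>n. smult (of_nat (n choose Suc w)) (h (Suc w)))"
    by (subst sum.atMost_Suc_shift) (simp add: smult_add_left sum.distrib add.assoc)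
  moreover have "(\<Sum>w\<le>n. smult (of_nat (n choose w)) (h w)) = h 0 + (\<Sum>w\<le>n. smult (of_nat (n choose Suc w)) (h (Suc w)))"
  proof -
    have "(\<Sum>w\<le>Suc n. smult (of_nat (n choose w)) (h w)) = (\<Sum>w\<le>n. smult (of_nat (n choose w)) (h w))"
      by (simp add: sum.atMost_Suc binomial_eq_0)
    moreover have "(\<Sum>w\<le>Suc n. smult (of_nat (n choose w)) (h w)) = h 0 + (\<Sum>w\<le>n. smult (of_nat (n choose Suc w)) (h (Suc w)))"
      by (subst sum.atMost_Suc_shift) simp
    ultimately show ?thesis by (simp add: binomial_eq_0)
  qed
  ultimately show ?thesis by (simp add: algebra_simps)
qed

lemma weight_form:
  fixes \<phi> :: "real \<Rightarrow> real"
  shows "(\<Sum>x\<in>cube n. smult (\<phi> (\<Sum>i<n. x i)) (\<Prod>i<n. [:1, x i:])) =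
    (\<Sum>w\<le>n. smult (of_nat (n choose w) * \<phi> (real n - 2 * real w)) ([:1,1:]^(n-w) * [:1,-1:]^w))"
proof (induction n arbitrary: \<phi>)
  case 0
  then show ?case by (simp add: cube_def)
next
  case (Suc n)
  define A :: "real poly" where "A = [:1,1:]"
  define B :: "real poly" where "B = [:1,-1:]"
  define R where "R v = (\<Sum>w\<le>n. smult (of_nat (n choose w) * \<phi> (v + (real n - 2 * real w))) (A^(n-w) * B^w))" for v
  have inner: "(\<Sum>g\<in>cube n. smult (\<phi> (\<Sum>i<Suc n. (g(n:=v)) i)) (\<Prod>i<Suc n. [:1, (g(n:=v)) i:]))
     = [:1,v:] * R v" for v
  proof -
    have "(\<Sum>g\<in>cube n. smult (\<phi> (\<Sum>i<Suc n. (g(n:=v)) i)) (\<Prod>i<Suc n. [:1, (g(n:=v)) i:]))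
       = (\<Sum>g\<in>cube n. [:1,v:] * smult ((\<lambda>s. \<phi> (v + s)) (\<Sum>i<n. g i)) (\<Prod>i<n. [:1, g i:]))"
    proof (rule sum.cong[OF refl])
      fix g
      have e1: "(\<Sum>i<n. (g(n:=v)) i) = (\<Sum>i<n. g i)" by (rule sum.cong) auto
      have e2: "(\<Prod>i<n. [:1, (g(n:=v)) i:]) = (\<Prod>i<n. [:1, g i:])" by (rule prod.cong) auto
      show "smult (\<phi> (\<Sum>i<Suc n. (g(n:=v)) i)) (\<Prod>i<Suc n. [:1, (g(n:=v)) i:]) =
            [:1,v:] * smult ((\<lambda>s. \<phi> (v + s)) (\<Sum>i<n. g i)) (\<Prod>i<n. [:1, g i:])"
        by (simp only: e1 e2 sum.lessThan_Suc prod.lessThan_Suc fun_upd_same mult_smult_right)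
           (simp add: add.commute mult.commute)
    qed
    also have "\<dots> = [:1,v:] * (\<Sum>g\<in>cube n. smult ((\<lambda>s. \<phi> (v + s)) (\<Sum>i<n. g i)) (\<Prod>i<n. [:1, g i:]))"
      by (simp only: sum_distrib_left)
    also have "\<dots> = [:1,v:] * R v"
      by (subst Suc.IH) (simp add: A_def B_def R_def)
    finally show ?thesis .
  qed
  have two: "(\<Sum>v\<in>{-1,1::real}. F v) = F (-1) + F 1" for F :: "real \<Rightarrow> real poly" by simp
  have "(\<Sum>x\<in>cube (Suc n). smult (\<phi> (\<Sum>i<Suc n. x i)) (\<Prod>i<Suc n. [:1, x i:]))
     = [:1,-1:] * R (-1) + [:1,1:] * R 1"
    by (simp only: cube_Suc_sum two inner)
  also have "\<dots> = A * (\<Sum>w\<le>n. smult (of_nat (n choose w) * \<phi> (1 + (real n - 2 * real w))) (A^(n-w) * B^w))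
     + B * (\<Sum>w\<le>n. smult (of_nat (n choose w) * \<phi> (-1 + (real n - 2 * real w))) (A^(n-w) * B^w))"
    by (simp only: R_def A_def B_def add.commute)
  also have "\<dots> = (\<Sum>w\<le>Suc n. smult (of_nat (Suc n choose w)) (smult (\<phi> (real (Suc n) - 2 * real w)) (A^(Suc n-w) * B^w)))"
  proof -
    have s1: "A * (\<Sum>w\<le>n. smult (of_nat (n choose w) * \<phi> (1 + (real n - 2 * real w))) (A^(n-w) * B^w))
       = (\<Sum>w\<le>n. smult (of_nat (n choose w)) (smult (\<phi> (real (Suc n) - 2 * real w)) (A^(Suc n-w) * B^w)))"
      unfolding sum_distrib_left
    proof (rule sum.cong[OF refl])
      fix w assume "w \<in> {..n}"
      then have "Suc n - w = Suc (n - w)" by auto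
      then show "A * smult (of_nat (n choose w) * \<phi> (1 + (real n - 2 * real w))) (A ^ (n - w) * B ^ w) =
         smult (of_nat (n choose w)) (smult (\<phi> (real (Suc n) - 2 * real w)) (A ^ (Suc n - w) * B ^ w))"
        by (simp add: algebra_simps)
    qed
    have s2: "B * (\<Sum>w\<le>n. smult (of_nat (n choose w) * \<phi> (-1 + (real n - 2 * real w))) (A^(n-w) * B^w))
       = (\<Sum>w\<le>n. smult (of_nat (n choose w)) (smult (\<phi> (real (Suc n) - 2 * real (Suc w))) (A^(Suc n-Suc w) * B^(Suc w))))"
      unfolding sum_distrib_left
      by (rule sum.cong[OF refl]) (simp add: algebra_simps)
    show ?thesis unfolding s1 s2 pascal_sum ..
  qed
  finally show ?case by (simp add: A_def B_def)
qed



lemma prod_monom1: "(\<Prod>i\<in>S. monom (c i) (Suc 0)) = monom (\<Prod>i\<in>S. c i) (card S)"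
  by (induction S rule: infinite_finite_induct) (auto simp: mult_monom)

lemma prod_lin_poly:
  assumes "finite I"
  shows "(\<Prod>i\<in>I. [:1, c i:]) = (\<Sum>S\<in>Pow I. monom (\<Prod>i\<in>S. c i) (card S))"
proof -
  have "(\<Prod>i\<in>I. [:1, c i:]) = (\<Prod>i\<in>I. monom (c i) (Suc 0) + 1)"
    by (rule prod.cong) (auto simp: monom_Suc one_pCons monom_0)
  also have "\<dots> = (\<Sum>S\<in>Pow I. (\<Prod>i\<in>S. monom (c i) (Suc 0)) * (\<Prod>i\<in>I - S. 1))"
    by (rule prod_add[OF assms])
  also have "\<dots> = (\<Sum>S\<in>Pow I. monom (\<Prod>i\<in>S. c i) (card S))"
    by (rule sum.cong[OF refl]) (simp add: prod_monom1)
  finally show ?thesis .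
qed

lemma prod_lin_coeff:
  fixes c :: "nat \<Rightarrow> real"
  assumes "finite I"
  shows "(\<Sum>k\<le>d. coeff (\<Prod>i\<in>I. [:1, c i:]) k * t^k) =
         (\<Sum>S\<in>{S. S \<subseteq> I \<and> card S \<le> d}. (\<Prod>i\<in>S. c i) * t^card S)"
proof -
  have "(\<Sum>k\<le>d. coeff (\<Prod>i\<in>I. [:1, c i:]) k * t^k) =
        (\<Sum>k\<le>d. \<Sum>S\<in>Pow I. (if card S = k then (\<Prod>i\<in>S. c i) * t^card S else 0))"
    unfolding prod_lin_poly[OF assms] coeff_sum coeff_monom sum_distrib_right by (intro sum.cong) auto
  also have "\<dots> = (\<Sum>S\<in>Pow I. \<Sum>k\<le>d. (if card S = k then (\<Prod>i\<in>S. c i) * t^card S else 0))"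
    by (rule sum.swap)
  also have "\<dots> = (\<Sum>S\<in>Pow I. if card S \<le> d then (\<Prod>i\<in>S. c i) * t^card S else 0)"
    by (rule sum.cong[OF refl]) (simp add: sum.delta)
  also have "\<dots> = (\<Sum>S\<in>{S. S \<subseteq> I \<and> card S \<le> d}. (\<Prod>i\<in>S. c i) * t^card S)"
    using assms by (subst sum.inter_filter[symmetric]) (auto intro!: sum.cong)
  finally show ?thesis .
qed

definition QQ :: "nat \<Rightarrow> real poly" where
  "QQ n = (\<Sum>x\<in>cube n. smult (Maj n x) (\<Prod>i<n. [:1, x i:]))"

lemma finite_cube: "finite (cube n)"
  unfolding cube_def by (rule finite_PiE) auto

lemma maj_trunc_QQ:
  "maj_trunc n d (\<lambda>_. t) * 2^n = (\<Sum>k\<le>d. coeff (QQ n) k * t^k)"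
proof -
  let ?F = "{S. S \<subseteq> {..<n} \<and> card S \<le> d}"
  have "maj_trunc n d (\<lambda>_. t) * 2^n = (\<Sum>S\<in>?F. (\<Sum>x\<in>cube n. Maj n x * (\<Prod>i\<in>S. x i)) * t^card S)"
    unfolding maj_trunc_def fourier_coeff_def by (simp add: sum_distrib_right sum_divide_distrib)
  also have "\<dots> = (\<Sum>x\<in>cube n. Maj n x * (\<Sum>S\<in>?F. (\<Prod>i\<in>S. x i) * t^card S))"
    by (simp add: sum_distrib_right sum_distrib_left mult.assoc sum.swap[of _ ?F])
  also have "\<dots> = (\<Sum>x\<in>cube n. Maj n x * (\<Sum>k\<le>d. coeff (\<Prod>i<n. [:1, x i:]) k * t^k))"
    by (simp add: prod_lin_coeff)
  also have "\<dots> = (\<Sum>k\<le>d. coeff (QQ n) k * t^k)"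
    unfolding QQ_def coeff_sum
    by (simp add: sum_distrib_right sum_distrib_left mult.assoc sum.swap[of _ "{..d}"])
  finally show ?thesis .
qed



lemma pderiv_sum: "pderiv (sum f S) = (\<Sum>x\<in>S. pderiv (f x))"
  using higher_pderiv_sum[of 1 f S] by simp

lemma smult_sum_right: "smult c (sum f S) = (\<Sum>x\<in>S. smult c (f x))"
  by (induction S rule: infinite_finite_induct) (auto simp: smult_add_right)

lemma pd_term:
  "pderiv ([:1,1::real:]^a * [:1,-1:]^b) =
     smult (of_nat a) ([:1,1:]^(a-1)*[:1,-1:]^b) - smult (of_nat b) ([:1,1:]^a * [:1,-1:]^(b-1))"
proof -
  have "pderiv [:1,1::real:] = 1" by (simp add: pderiv_pCons)
  moreover have "pderiv [:1,-1::real:] = -1"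
  proof -
    have "[:-1::real:] = - [:1:]" by simp
    then show ?thesis by (simp add: pderiv_pCons one_pCons)
  qed
  ultimately show ?thesis
    by (simp add: pderiv_mult pderiv_power algebra_simps)
qed

lemma pderiv_weight:
  fixes s :: "nat \<Rightarrow> real"
  shows "pderiv (\<Sum>w\<le>Suc N. smult (of_nat (Suc N choose w) * s w) ([:1,1:]^(Suc N - w) * [:1,-1:]^w)) =
    smult (of_nat (Suc N)) (\<Sum>w\<le>N. smult (of_nat (N choose w) * (s w - s (Suc w))) ([:1,1:]^(N-w)*[:1,-1:]^w))"
proof -
  define A :: "real poly" where "A = [:1,1:]"
  define B :: "real poly" where "B = [:1,-1:]"
  have "pderiv (\<Sum>w\<le>Suc N. smult (of_nat (Suc N choose w) * s w) (A^(Suc N - w) * B^w)) =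
     (\<Sum>w\<le>Suc N. smult (of_nat (Suc N choose w) * s w * of_nat (Suc N - w)) (A^(Suc N - w - 1) * B^w))
   - (\<Sum>w\<le>Suc N. smult (of_nat (Suc N choose w) * s w * of_nat w) (A^(Suc N - w) * B^(w - 1)))"
    unfolding pderiv_sum pderiv_smult A_def B_def pd_term
    by (simp add: smult_diff_right sum_subtractf)
  also have "(\<Sum>w\<le>Suc N. smult (of_nat (Suc N choose w) * s w * of_nat (Suc N - w)) (A^(Suc N - w - 1) * B^w))
      = (\<Sum>w\<le>N. smult (of_nat (Suc N) * (of_nat (N choose w) * s w)) (A^(N - w) * B^w))"
  proof -
    have "(\<Sum>w\<le>Suc N. smult (of_nat (Suc N choose w) * s w * of_nat (Suc N - w)) (A^(Suc N - w - 1) * B^w))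
      = (\<Sum>w\<le>N. smult (of_nat (Suc N choose w) * s w * of_nat (Suc N - w)) (A^(Suc N - w - 1) * B^w))"
      by (simp add: sum.atMost_Suc)
    also have "\<dots> = (\<Sum>w\<le>N. smult (of_nat (Suc N) * (of_nat (N choose w) * s w)) (A^(N - w) * B^w))"
    proof (rule sum.cong[OF refl])
      fix w
      have "real (Suc N choose w) * real (Suc N - w) = real (Suc N) * real (N choose w)"
        using binomial_absorb_comp[of "Suc N" w] by (metis diff_Suc_1 mult.commute of_nat_mult)
      then show "smult (of_nat (Suc N choose w) * s w * of_nat (Suc N - w)) (A^(Suc N - w - 1) * B^w) =
          smult (of_nat (Suc N) * (of_nat (N choose w) * s w)) (A^(N - w) * B^w)"
        by (simp add: algebra_simps)
    qed
    finally show ?thesis .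
  qed
  also have "(\<Sum>w\<le>Suc N. smult (of_nat (Suc N choose w) * s w * of_nat w) (A^(Suc N - w) * B^(w - 1)))
      = (\<Sum>w\<le>N. smult (of_nat (Suc N) * (of_nat (N choose w) * s (Suc w))) (A^(N - w) * B^w))"
  proof -
    have "(\<Sum>w\<le>Suc N. smult (of_nat (Suc N choose w) * s w * of_nat w) (A^(Suc N - w) * B^(w - 1)))
      = (\<Sum>w\<le>N. smult (of_nat (Suc N choose Suc w) * s (Suc w) * of_nat (Suc w)) (A^(Suc N - Suc w) * B^(Suc w - 1)))"
      by (subst sum.atMost_Suc_shift) simp
    also have "\<dots> = (\<Sum>w\<le>N. smult (of_nat (Suc N) * (of_nat (N choose w) * s (Suc w))) (A^(N - w) * B^w))"
    proof (rule sum.cong[OF refl])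
      fix w
      have "real (Suc N choose Suc w) * real (Suc w) = real (Suc N) * real (N choose w)"
        using Suc_times_binomial[of w N] by (metis mult.commute of_nat_mult)
      then have e: "real (Suc N choose Suc w) * s (Suc w) * real (Suc w) = real (Suc N) * (real (N choose w) * s (Suc w))"
        by (metis mult.commute mult.left_commute)
      show "smult (of_nat (Suc N choose Suc w) * s (Suc w) * of_nat (Suc w)) (A^(Suc N - Suc w) * B^(Suc w - 1)) =
          smult (of_nat (Suc N) * (of_nat (N choose w) * s (Suc w))) (A^(N - w) * B^w)"
        by (simp only: e diff_Suc_Suc diff_Suc_1 of_nat_id)
    qed
    finally show ?thesis .
  qed
  also have "(\<Sum>w\<le>N. smult (of_nat (Suc N) * (of_nat (N choose w) * s w)) (A^(N - w) * B^w))
     - (\<Sum>w\<le>N. smult (of_nat (Suc N) * (of_nat (N choose w) * s (Suc w))) (A^(N - w) * B^w))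
     = smult (of_nat (Suc N)) (\<Sum>w\<le>N. smult (of_nat (N choose w) * (s w - s (Suc w))) (A^(N-w)*B^w))"
    unfolding sum_subtractf[symmetric] smult_sum_right
    by (rule sum.cong[OF refl]) (simp only: smult_smult smult_diff_left[symmetric] right_diff_distrib)
  finally show ?thesis by (simp add: A_def B_def)
qed

lemma QQ_weight: "QQ n = (\<Sum>w\<le>n. smult (of_nat (n choose w) * sgn (real n - 2 * real w)) ([:1,1:]^(n-w) * [:1,-1:]^w))"
  unfolding QQ_def Maj_def by (rule weight_form)

lemma pderiv_QQ:
  "pderiv (QQ (2*m+1)) = smult (of_nat (2*m+1) * (2 * of_nat (2*m choose m))) ([:1,0,-1:]^m)"
proof -
  define s where "s w = sgn (real (Suc (2*m)) - 2 * real w)" for w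
  have sd: "s w - s (Suc w) = (if w = m then 2 else 0)" for w
    unfolding s_def by (auto simp: sgn_if)
  have "pderiv (QQ (2*m+1)) = smult (of_nat (Suc (2*m)))
     (\<Sum>w\<le>2*m. smult (of_nat (2*m choose w) * (s w - s (Suc w))) ([:1,1:]^(2*m-w)*[:1,-1:]^w))"
    unfolding QQ_weight using pderiv_weight[of "2*m" s] by (simp add: s_def)
  also have "(\<Sum>w\<le>2*m. smult (of_nat (2*m choose w) * (s w - s (Suc w))) ([:1,1:]^(2*m-w)*[:1,-1:]^w))
     = (\<Sum>w\<le>2*m. if w = m then smult (of_nat (2*m choose m) * 2) ([:1,1:]^m*[:1,-1:]^m) else 0)"
    by (rule sum.cong[OF refl]) (auto simp: sd)
  also have "\<dots> = smult (of_nat (2*m choose m) * 2) ([:1,1:]^m*[:1,-1:]^m)"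
    by (simp add: sum.delta)
  also have "[:1,1:]^m*[:1,-1:]^m = ([:1,0,-1::real:])^m"
    by (simp add: power_mult_distrib[symmetric])
  finally show ?thesis by (simp add: algebra_simps)
qed

lemma coeff_R:
  "coeff ([:1,0,-1::real:]^m) k = (\<Sum>j\<le>m. if k = 2*j then (-1)^j * of_nat (m choose j) else 0)"
proof -
  have "[:1,0,-1::real:] = monom (-1) 2 + 1"
    by (simp add: monom_altdef numeral_2_eq_2 one_pCons)
  then have "[:1,0,-1::real:]^m = (\<Sum>j\<le>m. of_nat (m choose j) * monom (-1) 2 ^ j * 1^(m-j))"
    by (simp add: binomial_ring)
  also have "\<dots> = (\<Sum>j\<le>m. monom ((-1)^j * of_nat (m choose j)) (2*j))"
    by (rule sum.cong[OF refl]) (simp add: monom_power of_nat_monom mult_monom mult.commute)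
  finally show ?thesis by (simp add: coeff_sum coeff_monom eq_commute[of k])
qed



lemma trunc_formula:
  assumes d: "d \<le> 2*m+1"
  shows "maj_trunc (2*m+1) d (\<lambda>_. t) * 2^(2*m+1) = coeff (QQ (2*m+1)) 0 +
     (of_nat (2*m+1) * (2 * of_nat (2*m choose m))) *
       (\<Sum>j<(d+1) div 2. (-1)^j * of_nat (m choose j) * t^(2*j+1) / of_nat (2*j+1))"
proof -
  define c :: real where "c = of_nat (2*m+1) * (2 * of_nat (2*m choose m))"
  define Q where "Q = QQ (2*m+1)"
  have cQ: "coeff Q (Suc k) = c * (\<Sum>j\<le>m. if k = 2*j then (-1)^j * of_nat (m choose j) else 0) / of_nat (Suc k)" for k
  proof -
    have "coeff (pderiv Q) k = of_nat (Suc k) * coeff Q (Suc k)" by (rule coeff_pderiv)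
    moreover have "coeff (pderiv Q) k = c * (\<Sum>j\<le>m. if k = 2*j then (-1)^j * of_nat (m choose j) else 0)"
      unfolding Q_def pderiv_QQ c_def coeff_smult coeff_R ..
    ultimately show ?thesis by (simp add: field_simps)
  qed
  have "maj_trunc (2*m+1) d (\<lambda>_. t) * 2^(2*m+1) = (\<Sum>k\<le>d. coeff Q k * t^k)"
    unfolding Q_def by (rule maj_trunc_QQ)
  also have "\<dots> = coeff Q 0 + (\<Sum>k<d. coeff Q (Suc k) * t^(Suc k))"
    by (subst sum.atMost_shift) simp
  also have "(\<Sum>k<d. coeff Q (Suc k) * t^(Suc k)) =
     c * (\<Sum>k<d. \<Sum>j\<le>m. if k = 2*j then (-1)^j * of_nat (m choose j) * t^(2*j+1) / of_nat (2*j+1) else 0)"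
    unfolding cQ sum_distrib_left
    by (rule sum.cong[OF refl]) (auto simp: sum_distrib_right sum_divide_distrib intro!: sum.cong)
  also have "(\<Sum>k<d. \<Sum>j\<le>m. if k = 2*j then (-1)^j * of_nat (m choose j) * t^(2*j+1) / of_nat (2*j+1) else 0)
     = (\<Sum>j\<le>m. \<Sum>k<d. if k = 2*j then (-1)^j * of_nat (m choose j) * t^(2*j+1) / of_nat (2*j+1) else 0)"
    by (rule sum.swap)
  also have "\<dots> = (\<Sum>j\<le>m. if 2*j < d then (-1)^j * of_nat (m choose j) * t^(2*j+1) / of_nat (2*j+1) else 0)"
    by (rule sum.cong[OF refl], subst sum.delta) auto
  also have "\<dots> = (\<Sum>j\<in>{..m} \<inter> {j. 2*j < d}. (-1)^j * of_nat (m choose j) * t^(2*j+1) / of_nat (2*j+1))"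
    by (subst sum.inter_restrict) auto
  also have "{..m} \<inter> {j. 2*j < d} = {..<(d+1) div 2}"
    using d by auto
  finally show ?thesis by (simp add: c_def Q_def)
qed

lemma coeff_QQ_0: "\<bar>coeff (QQ n) 0\<bar> \<le> 2^n"
proof -
  have "coeff (QQ n) 0 = (\<Sum>x\<in>cube n. Maj n x)"
    unfolding QQ_def coeff_sum coeff_smult by (simp add: poly_0_coeff_0[symmetric] poly_prod)
  also have "\<bar>\<dots>\<bar> \<le> (\<Sum>x\<in>cube n. \<bar>Maj n x\<bar>)" by (rule sum_abs)
  also have "\<dots> \<le> (\<Sum>x\<in>cube n. 1)"
    by (rule sum_mono) (simp add: Maj_def sgn_if)
  also have "\<dots> = 2^n"
    by (simp add: cube_def card_PiE)
  finally show ?thesis .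
qed



lemma alt_bound:
  fixes u :: "nat \<Rightarrow> real"
  assumes "u 0 \<ge> 0" "\<And>j. 1 \<le> j \<Longrightarrow> j \<le> J \<Longrightarrow> 2 * u (j-1) \<le> u j"
  shows "u J / 2 \<le> (-1)^J * (\<Sum>j\<le>J. (-1)^j * u j) \<and> (-1)^J * (\<Sum>j\<le>J. (-1)^j * u j) \<le> u J \<and> 2^J * u 0 \<le> u J"
  using assms(2)
proof (induction J)
  case 0
  then show ?case using assms(1) by simp
next
  case (Suc J)
  have IH: "u J / 2 \<le> (-1)^J * (\<Sum>j\<le>J. (-1)^j * u j) \<and> (-1)^J * (\<Sum>j\<le>J. (-1)^j * u j) \<le> u J \<and> 2^J * u 0 \<le> u J"
    using Suc.IH Suc.prems by auto
  have r: "2 * u J \<le> u (Suc J)" using Suc.prems[of "Suc J"] by simp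
  define S where "S = (\<Sum>j\<le>J. (-1)^j * u j)"
  have e: "(-1::real)^(Suc J) * (\<Sum>j\<le>Suc J. (-1)^j * u j) = u (Suc J) - (-1)^J * S"
  proof -
    have "(-1::real)^(Suc J) * (\<Sum>j\<le>Suc J. (-1)^j * u j) = (-1)^(Suc J) * (S + (-1)^(Suc J) * u (Suc J))"
      by (simp add: S_def)
    also have "\<dots> = u (Suc J) - (-1)^J * S"
      by (simp add: algebra_simps)
    finally show ?thesis .
  qed
  have "0 \<le> u 0" by (rule assms(1))
  then have "0 \<le> u J" using IH by (smt (verit) zero_le_power mult_nonneg_nonneg)
  then show ?case unfolding e using IH r unfolding S_def[symmetric] by auto
qed

lemma binom_ratio: "real (m choose Suc i) * real (Suc i) = real (m choose i) * real (m - i)"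
proof -
  have "Suc i * (m choose Suc i) = m * ((m - 1) choose i)" by (rule binomial_absorption)
  also have "\<dots> = (m - i) * (m choose i)" by (rule binomial_absorb_comp[symmetric])
  finally have "(m choose Suc i) * Suc i = (m choose i) * (m - i)" by (simp add: mult.commute)
  then show ?thesis by (metis of_nat_mult)
qed

lemma field_id:
  fixes D1 D2 D3 :: real
  assumes "D1 \<noteq> 0" "D2 \<noteq> 0" "D3 \<noteq> 0"
  shows "b * M / D1 * (P * a2) / D2 - 2 * (b * P / D3) = b * P * (D3 * (M * a2) - 2 * D2 * D1) / (D1 * D2 * D3)"
  using assms by (simp add: field_simps)

lemma ratio_ok:
  fixes a :: real
  assumes a: "0 < a" "a < 1" and h: "24 * (real i + 1) < a^2 * (2 * real m + 1)"
  shows "2 * (real (m choose i) * a^(2*i+1) / real (2*i+1)) \<le> real (m choose Suc i) * a^(2*Suc i+1) / real (2*Suc i+1)"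
proof -
  have a2: "a^2 < 1" "0 < a^2" using a by (auto simp: power_less_one_iff)
  have "a^2 * (2 * real m + 1) \<le> 2 * real m + 1" using a2 by simp
  then have im: "24 * (real i + 1) < 2 * real m + 1" using h by linarith
  then have iml: "i < m" by simp
  have h1: "real (m - i) \<ge> (2 * real m + 1) / 4" using im iml by (simp add: of_nat_diff)
  have h2: "real (m - i) * a^2 \<ge> (2 * real m + 1) / 4 * a^2"
    using h1 a2 by (simp add: mult_right_mono)
  have "(2 * real m + 1) / 4 * a^2 = a^2 * (2*real m+1) / 4" by simp
  then have h3: "6 * (real i + 1) \<le> real (m - i) * a^2" using h2 h by linarith
  have h4: "2 * (2 * real i + 3) * (real i + 1) \<le> (2 * real i + 1) * (real (m - i) * a^2)"
  proof -
    have "2 * (2 * real i + 3) * (real i + 1) \<le> (2 * real i + 1) * (6 * (real i + 1))"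
      by (simp add: algebra_simps)
    also have "\<dots> \<le> (2 * real i + 1) * (real (m - i) * a^2)"
      by (rule mult_left_mono[OF h3]) simp
    finally show ?thesis .
  qed
  define b where "b = real (m choose i)"
  have b: "b > 0" using iml by (simp add: b_def)
  have c: "real (m choose Suc i) = b * real (m - i) / real (Suc i)"
    using binom_ratio[of m i] by (simp add: b_def field_simps)
  define P where "P = a^(2*i+1)"
  have p: "P > 0" using a by (simp add: P_def)
  have pe: "a^(2*Suc i+1) = P * a^2" unfolding P_def by (simp add: power_add[symmetric])
  define M where "M = real (m - i)"
  have r1: "real (Suc i) = real i + 1" "real (2*Suc i+1) = 2*real i+3" "real (2*i+1) = 2*real i+1" by simp_all
  have nz: "real i + 1 \<noteq> 0" "2*real i+3 \<noteq> 0" "2*real i+1 \<noteq> 0" by linarith+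
  have key: "b * M / real (Suc i) * (P * a^2) / real (2*Suc i+1) - 2 * (b * P / real (2*i+1))
     = b * P * ((2 * real i + 1) * (M * a^2) - 2 * (2 * real i + 3) * (real i + 1)) / ((real i + 1) * (2 * real i + 3) * (2 * real i + 1))"
    unfolding r1 using field_id[OF nz] by simp
  have "0 \<le> b * P * ((2 * real i + 1) * (M * a^2) - 2 * (2 * real i + 3) * (real i + 1)) / ((real i + 1) * (2 * real i + 3) * (2 * real i + 1))"
    using h4 b p unfolding M_def by (intro divide_nonneg_nonneg mult_nonneg_nonneg) auto
  then have "2 * (b * P / real (2*i+1)) \<le> b * M / real (Suc i) * (P * a^2) / real (2*Suc i+1)"
    using key by linarith
  then show ?thesis unfolding c pe b_def[symmetric] P_def[symmetric] M_def by simp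
qed



lemma central: "4^m \<le> (2*m+1) * (2*m choose m)"
proof -
  have "4^m = (2::nat)^(2*m)" by (simp add: power_mult)
  also have "\<dots> = (\<Sum>k\<le>2*m. 2*m choose k)" by (rule choose_row_sum[symmetric])
  also have "\<dots> \<le> (\<Sum>k\<le>2*m. 2*m choose m)" by (rule sum_mono) (rule binomial_maximum')
  also have "\<dots> = (2*m+1) * (2*m choose m)" by simp
  finally show ?thesis .
qed

lemma lower_bound:
  fixes a :: real and k :: nat
  assumes a: "0 < a" "a < 1"
  defines "d \<equiv> nat \<lfloor>a^2/12 * real (2*k+1)\<rfloor>"
  shows "a * real ((d+1) div 2) / 2 - 1 \<le> \<bar>maj_trunc (2*k+1) d (\<lambda>_. a)\<bar>"
proof (cases "(d+1) div 2 = 0")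
  case True
  then show ?thesis by simp
next
  case False
  define L where "L = (d+1) div 2"
  define J where "J = L - 1"
  have LJ: "L = Suc J" using False by (simp add: L_def J_def)
  have a2: "0 < a^2" "a^2 < 1" using a by (auto simp: power_less_one_iff)
  have xpos: "0 \<le> a^2/12 * real (2*k+1)" using a2 by simp
  have hd: "real d \<le> a^2/12 * real (2*k+1)"
  proof -
    have "real d = real_of_int \<lfloor>a^2/12 * real (2*k+1)\<rfloor>" unfolding d_def using xpos by simp
    also have "\<dots> \<le> a^2/12 * real (2*k+1)" by (rule of_int_floor_le)
    finally show ?thesis .
  qed
  have "a^2/12 * real (2*k+1) \<le> 1 * real (2*k+1)"
    using a2 by (intro mult_right_mono) auto
  then have "a^2/12 * real (2*k+1) \<le> real (2*k+1)" by simp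
  then have dn: "d \<le> 2*k+1" using hd by linarith
  define u where "u j = real (k choose j) * a^(2*j+1) / real (2*j+1)" for j
  define c :: real where "c = of_nat (2*k+1) * (2 * of_nat (2*k choose k))"
  define \<Sigma> where "\<Sigma> = (\<Sum>j\<le>J. (-1)^j * u j)"
  have form: "maj_trunc (2*k+1) d (\<lambda>_. a) * 2^(2*k+1) = coeff (QQ (2*k+1)) 0 + c * \<Sigma>"
  proof -
    have "{..<(d+1) div 2} = {..J}" unfolding L_def[symmetric] LJ by (rule lessThan_Suc_atMost)
    then show ?thesis
      unfolding trunc_formula[OF dn] c_def \<Sigma>_def u_def by (simp add: mult.assoc)
  qed
  have ratio: "2 * u (j-1) \<le> u j" if "1 \<le> j" "j \<le> J" for j
  proof -
    define i where "i = j - 1"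
    have i: "j = Suc i" using that(1) unfolding i_def by simp
    have "2 * L \<le> d + 1" unfolding L_def by simp
    then have "2 * (i+1) + 1 \<le> d" using that(2) i LJ by simp
    then have "real (2 * (i+1) + 1) \<le> a^2/12 * real (2*k+1)" using hd by linarith
    then have h0: "36 + 24 * real i \<le> a^2 * (1 + 2 * real k)" by simp
    have h: "24 * (real i + 1) < a^2 * (2 * real k + 1)"
    proof -
      have "24 * (real i + 1) < 36 + 24 * real i" by simp
      also have "\<dots> \<le> a^2 * (1 + 2 * real k)" by (rule h0)
      also have "\<dots> = a^2 * (2 * real k + 1)" by simp
      finally show ?thesis .
    qed
    show ?thesis unfolding i u_def using ratio_ok[OF a h] by simp
  qed
  have u0: "u 0 \<ge> 0" using a by (simp add: u_def)
  have ab: "u J / 2 \<le> (-1)^J * \<Sigma> \<and> (-1)^J * \<Sigma> \<le> u J \<and> 2^J * u 0 \<le> u J"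
    unfolding \<Sigma>_def by (rule alt_bound[OF u0 ratio]) auto
  have absS: "\<bar>\<Sigma>\<bar> \<ge> 2^J * a / 2"
  proof -
    have "\<bar>(-1::real)^J * \<Sigma>\<bar> = \<bar>\<Sigma>\<bar>" by (simp add: abs_mult)
    moreover have "(-1::real)^J * \<Sigma> \<le> \<bar>(-1::real)^J * \<Sigma>\<bar>" by (rule abs_ge_self)
    moreover have "u 0 = a" by (simp add: u_def)
    then have "2^J * a \<le> u J" using ab by simp
    ultimately show ?thesis using ab by linarith
  qed
  have cbig: "c \<ge> 2^(2*k+1)"
  proof -
    have "(4::nat)^k \<le> (2*k+1) * (2*k choose k)" by (rule central)
    then have "real ((4::nat)^k) \<le> real ((2*k+1) * (2*k choose k))" by (simp only: of_nat_le_iff)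
    then have "4^k \<le> real (2*k+1) * real (2*k choose k)" by (simp only: of_nat_mult of_nat_power of_nat_numeral)
    moreover have "(2::real)^(2*k+1) = 2 * 4^k" by (simp add: power_mult)
    ultimately show ?thesis unfolding c_def by simp
  qed
  have q0: "\<bar>coeff (QQ (2*k+1)) 0\<bar> \<le> 2^(2*k+1)" by (rule coeff_QQ_0)
  have pos: "(0::real) < 2^(2*k+1)" by simp
  have "\<bar>maj_trunc (2*k+1) d (\<lambda>_. a)\<bar> * 2^(2*k+1) = \<bar>coeff (QQ (2*k+1)) 0 + c * \<Sigma>\<bar>"
  proof -
    have "\<bar>maj_trunc (2*k+1) d (\<lambda>_. a) * 2^(2*k+1)\<bar> = \<bar>maj_trunc (2*k+1) d (\<lambda>_. a)\<bar> * 2^(2*k+1)"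
      by (simp add: abs_mult)
    then show ?thesis using form by simp
  qed
  also have "\<dots> \<ge> c * \<bar>\<Sigma>\<bar> - 2^(2*k+1)"
  proof -
    have "c \<ge> 0" using cbig pos by linarith
    then have "\<bar>c * \<Sigma>\<bar> = c * \<bar>\<Sigma>\<bar>" by (simp add: abs_mult)
    then show ?thesis using q0 by linarith
  qed
  finally have m1: "c * \<bar>\<Sigma>\<bar> - 2^(2*k+1) \<le> \<bar>maj_trunc (2*k+1) d (\<lambda>_. a)\<bar> * 2^(2*k+1)" .
  have "2^(2*k+1) * \<bar>\<Sigma>\<bar> \<le> c * \<bar>\<Sigma>\<bar>" using cbig by (intro mult_right_mono) auto
  then have "(\<bar>\<Sigma>\<bar> - 1) * 2^(2*k+1) \<le> \<bar>maj_trunc (2*k+1) d (\<lambda>_. a)\<bar> * 2^(2*k+1)"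
    using m1 by (simp add: algebra_simps)
  then have m2: "\<bar>\<Sigma>\<bar> - 1 \<le> \<bar>maj_trunc (2*k+1) d (\<lambda>_. a)\<bar>"
    using pos by (simp add: mult_le_cancel_right)
  have "real L \<le> 2^J"
  proof -
    have "J < 2^J" by (rule less_exp)
    then have "L \<le> 2^J" using LJ by (simp add: Suc_le_eq)
    then have "real L \<le> real (2^J)" by (simp only: of_nat_le_iff)
    then show ?thesis by simp
  qed
  then have "a * real L / 2 \<le> 2^J * a / 2" using a by simp
  then show ?thesis using m2 absS unfolding L_def by linarith
qed

lemma gen1: fixes x y z :: real assumes "z \<le> 2*x" "y - 1 \<le> z" shows "(y-1)/2 \<le> x"
  using assms by simp

lemma gen2: fixes x y z w :: real assumes "x \<le> y" "w = x / 2 - 1" "y / 2 - 1 \<le> z" shows "w \<le> z"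
  using assms by simp

theorem mainTheorem8:
  fixes a b :: real
  assumes "0 < a" "a < b" "b < 1"
  shows "\<exists>\<delta>::real. 0 < \<delta> \<and> \<delta> < 1 \<and>
    (\<exists>t :: nat \<Rightarrow> real. (\<forall>n. odd n \<longrightarrow> a \<le> t n \<and> t n \<le> b) \<and>
      filterlim (\<lambda>k. \<bar>maj_trunc (2*k+1) (nat \<lfloor>\<delta> * real (2*k+1)\<rfloor>) (\<lambda>_. t (2*k+1))\<bar>)
        at_top sequentially)"
proof -
  have a: "0 < a" "a < 1" using assms by auto
  define \<delta> where "\<delta> = a^2/12"
  have a2: "0 < a^2" "a^2 < 1" using a by (auto simp: power_less_one_iff)
  have dpos: "0 < \<delta>" "\<delta> < 1" using a2 by (auto simp: \<delta>_def)
  define g where "g k = (a*(\<delta> - 1)/4 - 1) + (a*\<delta>/2) * real k" for k :: nat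
  have lim: "filterlim g at_top sequentially"
    unfolding g_def
    by (rule filterlim_tendsto_add_at_top[OF tendsto_const],
        rule filterlim_tendsto_pos_mult_at_top[OF tendsto_const _ filterlim_real_sequentially])
       (use a dpos in simp)
  have ineq: "g k \<le> \<bar>maj_trunc (2*k+1) (nat \<lfloor>\<delta> * real (2*k+1)\<rfloor>) (\<lambda>_. a)\<bar>" for k
  proof -
    define d where "d = nat \<lfloor>\<delta> * real (2*k+1)\<rfloor>"
    have lb: "a * real ((d+1) div 2) / 2 - 1 \<le> \<bar>maj_trunc (2*k+1) d (\<lambda>_. a)\<bar>"
      unfolding d_def \<delta>_def by (rule lower_bound[OF a])
    have x0: "0 \<le> \<delta> * real (2*k+1)" using dpos by simp
    have "real d = real_of_int \<lfloor>\<delta> * real (2*k+1)\<rfloor>" unfolding d_def using x0 by simp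
    then have hd: "real d \<ge> \<delta> * real (2*k+1) - 1" by linarith
    have "d \<le> 2 * ((d+1) div 2)" by simp
    then have "real d \<le> 2 * real ((d+1) div 2)" by (metis of_nat_le_iff of_nat_mult of_nat_numeral)
    then have L: "real ((d+1) div 2) \<ge> (\<delta> * real (2*k+1) - 1) / 2" using hd by (rule gen1)
    have "a * ((\<delta> * real (2*k+1) - 1) / 2) \<le> a * real ((d+1) div 2)"
      using L a by (intro mult_left_mono) auto
    moreover have "g k = a * ((\<delta> * real (2*k+1) - 1) / 2) / 2 - 1"
      unfolding g_def by (simp add: field_simps)
    ultimately show ?thesis using lb unfolding d_def by (rule gen2)
  qed
  have "filterlim (\<lambda>k. \<bar>maj_trunc (2*k+1) (nat \<lfloor>\<delta> * real (2*k+1)\<rfloor>) (\<lambda>_. a)\<bar>) at_top sequentially"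
    by (rule filterlim_at_top_mono[OF lim]) (use ineq in auto)
  then show ?thesis using dpos assms
    by (intro exI[of _ \<delta>] conjI exI[of _ "\<lambda>_. a"]) auto
qed

end
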